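(* For every positive integer $p$, the number $m(2,p)$ of vertices of $H_\infty(2,p)$ satisfies $m(2,p)=8\sum_{j=1}^p\phi(j)$, where $\phi$ is the Euler totient function (with $\phi(1)=1$).
   Context: For $v\in\mathbb{Z}^2$, $\gcd(v)$ is the largest integer dividing both entries of $v$, and $v\succ0$ means the first nonzero coordinate of $v$ is positive. $H_\infty(2,p)=\sum[0,1]\{v\in\mathbb{Z}^2: \|v\|_\infty\leq p,\ \gcd(v)=1,\ v\succ0\}$, the Minkowski sum of the segments $[0,v]$ over these vectors $v$. $\phi(j)$ counts positive integers less than or equal to $j$ that are relatively prime to $j$. *)

theory Defs
  imports "HOL-Analysis.Analysis" "HOL-Number_Theory.Number_Theory"
begin

definition gens :: "nat \<Rightarrow> (int \<times> int) set" where
  "gens p = {(a, b). \<bar>a\<bar> \<le> int p \<and> \<bar>b\<bar> \<le> int p \<and> gcd a b = 1 \<and> (a > 0 \<or> (a = 0 \<and> b > 0))}"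

definition to_real2 :: "int \<times> int \<Rightarrow> real \<times> real" where
  "to_real2 v = (real_of_int (fst v), real_of_int (snd v))"

definition H_inf2 :: "nat \<Rightarrow> (real \<times> real) set" where
  "H_inf2 p = (\<Sum>v\<in>gens p. closed_segment 0 (to_real2 v))"

definition m2 :: "nat \<Rightarrow> nat" where
  "m2 p = card {x. x extreme_point_of H_inf2 p}"

end

theory Submission
  imports Defs
begin


definition gmap :: "nat \<times> nat \<times> nat \<Rightarrow> int \<times> int" where
 "gmap = (\<lambda>(j,i,k). if i=0 then (int j, int k) else if i=1 then (int j, int k - int j)
     else if i=2 then (int j - int k, int j) else (int k, - int j))"

definition Dom :: "nat \<Rightarrow> (nat \<times> nat \<times> nat) set" where
 "Dom p = (SIGMA j:{1..p}. {0..<4::nat} \<times> totatives j)"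

lemma card_Dom: "card (Dom p) = 4 * (\<Sum>j=1..p. totient j)"
  unfolding Dom_def
  by (subst card_SigmaI) (auto simp: card_cartesian_product totient_def sum_distrib_left)

lemma coprime_int_nat: "coprime (int a) (int b) = coprime a b"
  by simp

lemma inj_gmap: "inj_on gmap (Dom p)"
proof (rule inj_onI)
  fix x y assume x: "x \<in> Dom p" and y: "y \<in> Dom p" and e: "gmap x = gmap y"
  obtain j i k where xx: "x = (j,i,k)" by (cases x) auto
  obtain j' i' k' where yy: "y = (j',i',k')" by (cases y) auto
  have b: "1 \<le> j" "i < 4" "0 < k" "k \<le> j" "1 \<le> j'" "i' < 4" "0 < k'" "k' \<le> j'"
    using x y unfolding xx yy Dom_def totatives_def by auto
  show "x = y" using e b unfolding xx yy gmap_def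
    by (auto split: if_splits)
qed

lemma cop_from: assumes "0 \<le> x" "gcd x (int j) = 1" shows "coprime (nat x) j"
proof -
  have e: "int (nat x) = x" using assms(1) by simp
  have "coprime (int (nat x)) (int j)" unfolding e using assms(2) by (simp add: coprime_iff_gcd_eq_1)
  then show ?thesis by (simp only: coprime_int_nat)
qed

lemma mem_gens: "(a,b) \<in> gens p \<longleftrightarrow> \<bar>a\<bar> \<le> int p \<and> \<bar>b\<bar> \<le> int p \<and> gcd a b = 1 \<and> (a > 0 \<or> (a = 0 \<and> b > 0))"
  by (simp add: gens_def)

lemma gmap_image: "gmap ` Dom p = gens p"
proof
  show "gmap ` Dom p \<subseteq> gens p"
  proof
    fix y assume "y \<in> gmap ` Dom p"
    then obtain j i k where d: "(j,i,k) \<in> Dom p" and y: "y = gmap (j,i,k)" by auto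
    have b: "1 \<le> j" "j \<le> p" "i < 4" "0 < k" "k \<le> j" and c: "coprime k j"
      using d unfolding Dom_def totatives_def by auto
    have "coprime (int k) (int j)" using c by (simp only: coprime_int_nat)
    then have ci: "gcd (int k) (int j) = 1" by (simp only: coprime_iff_gcd_eq_1)
    have ci': "gcd (int j) (int k) = 1" using ci gcd.commute[of "int j" "int k"] by simp
    have "i = 0 \<or> i = 1 \<or> i = 2 \<or> i = 3" using b by linarith
    then show "y \<in> gens p"
    proof (elim disjE)
      assume "i = 0"
      then have yy: "y = (int j, int k)" unfolding y gmap_def by simp
      show ?thesis using b ci' unfolding yy mem_gens by simp
    next
      assume "i = 1"
      then have yy: "y = (int j, int k - int j)" unfolding y gmap_def by simp
      have "gcd (int k - int j) (int j) = gcd (int k) (int j)" by (rule gcd_diff1)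
      then have "gcd (int j) (int k - int j) = 1" using ci gcd.commute[of "int j" "int k - int j"] by simp
      then show ?thesis using b unfolding yy mem_gens by simp
    next
      assume "i = 2"
      then have yy: "y = (int j - int k, int j)" unfolding y gmap_def by simp
      have "gcd (int j - int k) (int j) = gcd (int k) (int j)" by (rule gcd_diff2)
      then have "gcd (int j - int k) (int j) = 1" using ci by simp
      then show ?thesis using b unfolding yy mem_gens by (simp; arith)
    next
      assume "i = 3"
      then have yy: "y = (int k, - int j)" unfolding y gmap_def by simp
      have "gcd (int k) (- int j) = 1" using ci by simp
      then show ?thesis using b unfolding yy mem_gens by simp
    qed
  qed
next
  show "gens p \<subseteq> gmap ` Dom p"
  proof
    fix v assume v: "v \<in> gens p"
    obtain a b where vv: "v = (a,b)" by (cases v)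
    have h: "\<bar>a\<bar> \<le> int p" "\<bar>b\<bar> \<le> int p" "gcd a b = 1" "a > 0 \<or> (a = 0 \<and> b > 0)"
      using v unfolding vv gens_def by auto
    define J where "J = max \<bar>a\<bar> \<bar>b\<bar>"
    have JJ: "1 \<le> J \<and> J \<le> int p \<and> ((a = J \<and> b > 0) \<or> (a = J \<and> b \<le> 0 \<and> b > - J) \<or> (a = J \<and> b = - J)
      \<or> (a < J \<and> b = J) \<or> (a < J \<and> b = - J))"
      using h(1,2,4) J_def by arith
    define j where "j = nat J"
    have jJ: "int j = J" using JJ unfolding j_def by simp
    have j1: "1 \<le> j" using JJ jJ by linarith
    have jp: "j \<le> p" using JJ jJ by linarith
    have "(a = int j \<and> b > 0) \<or> (a = int j \<and> b \<le> 0 \<and> b > - int j) \<or> (a = int j \<and> b = - int j)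
      \<or> (a < int j \<and> b = int j) \<or> (a < int j \<and> b = - int j)"
      using JJ unfolding jJ by blast
    then show "v \<in> gmap ` Dom p"
    proof (elim disjE)
      assume c: "a = int j \<and> b > 0"
      have "\<bar>b\<bar> \<le> J" unfolding J_def by simp
      then have "b \<le> int j" using jJ by linarith
      have "gcd b (int j) = 1" using h(3) c gcd.commute[of b "int j"] by simp
      then have "coprime (nat b) j" using c by (intro cop_from) auto
      then have "(j,0,nat b) \<in> Dom p" using j1 jp c `b \<le> int j` unfolding Dom_def totatives_def by auto
      moreover have "gmap (j,0,nat b) = v" using c unfolding gmap_def vv by auto
      ultimately show ?thesis by (metis image_eqI)
    next
      assume c: "a = int j \<and> b \<le> 0 \<and> b > - int j"
      have "gcd b (int j) = 1" using h(3) c gcd.commute[of b "int j"] by simp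
      moreover have "gcd (b + int j) (int j) = gcd b (int j)" by (rule gcd_add1)
      ultimately have "coprime (nat (b + int j)) j" using c by (intro cop_from) auto
      then have "(j,1,nat (b + int j)) \<in> Dom p" using j1 jp c unfolding Dom_def totatives_def by auto
      moreover have "gmap (j,1,nat (b + int j)) = v" using c unfolding gmap_def vv by auto
      ultimately show ?thesis by (metis image_eqI)
    next
      assume c: "a = int j \<and> b = - int j"
      then have "j = 1" using h by simp
      then have "(j,3,1) \<in> Dom p" using jp unfolding Dom_def totatives_def by auto
      moreover have "gmap (j,3,1) = v" using c `j=1` unfolding gmap_def vv by auto
      ultimately show ?thesis by (metis image_eqI)
    next
      assume c: "a < int j \<and> b = int j"
      have "a \<ge> 0" using h c j1 by auto
      have "gcd a (int j) = 1" using h(3) c gcd.commute[of a "int j"] by simp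
      moreover have "gcd (int j - a) (int j) = gcd a (int j)" by (rule gcd_diff2)
      ultimately have "coprime (nat (int j - a)) j" using c by (intro cop_from) auto
      then have "(j,2,nat (int j - a)) \<in> Dom p" using j1 jp c `a \<ge> 0` unfolding Dom_def totatives_def by auto
      moreover have "gmap (j,2,nat (int j - a)) = v" using c `a \<ge> 0` unfolding gmap_def vv by auto
      ultimately show ?thesis by (metis image_eqI)
    next
      assume c: "a < int j \<and> b = - int j"
      have "a > 0" using h c j1 by auto
      have "gcd a (int j) = 1" using h(3) c by simp
      then have "coprime (nat a) j" using `a>0` by (intro cop_from) auto
      then have "(j,3,nat a) \<in> Dom p" using j1 jp c `a > 0` unfolding Dom_def totatives_def by auto
      moreover have "gmap (j,3,nat a) = v" using c `a > 0` unfolding gmap_def vv by auto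
      ultimately show ?thesis by (metis image_eqI)
    qed
  qed
qed

lemma card_gens: "card (gens p) = 4 * (\<Sum>j=1..p. totient j)"
  by (metis card_Dom card_image gmap_image inj_gmap)



lemma closed_segment_0: "closed_segment 0 v = {u *\<^sub>R v | u. 0 \<le> u \<and> u \<le> (1::real)}"
  unfolding closed_segment_def by auto

lemma Zparam:
  fixes G :: "'a::real_vector set"
  assumes "finite G"
  shows "(\<Sum>v\<in>G. closed_segment 0 v) = {\<Sum>v\<in>G. t v *\<^sub>R v | t. \<forall>v\<in>G. 0 \<le> t v \<and> t v \<le> 1}"
  using assms
proof (induction G rule: finite_induct)
  case empty
  then show ?case by auto
next
  case (insert x F)
  have "(\<Sum>v\<in>insert x F. closed_segment 0 v) = closed_segment 0 x + (\<Sum>v\<in>F. closed_segment 0 v)"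
    using insert by simp
  also have "\<dots> = {\<Sum>v\<in>insert x F. t v *\<^sub>R v | t. \<forall>v\<in>insert x F. 0 \<le> t v \<and> t v \<le> 1}"
  proof
    show "closed_segment 0 x + (\<Sum>v\<in>F. closed_segment 0 v) \<subseteq> {\<Sum>v\<in>insert x F. t v *\<^sub>R v | t. \<forall>v\<in>insert x F. 0 \<le> t v \<and> t v \<le> 1}"
    proof
      fix z assume "z \<in> closed_segment 0 x + (\<Sum>v\<in>F. closed_segment 0 v)"
      then obtain c s where z: "z = c + s" and c: "c \<in> closed_segment 0 x" and s: "s \<in> (\<Sum>v\<in>F. closed_segment 0 v)"
        by (auto simp: set_plus_def)
      obtain u where u: "c = u *\<^sub>R x" "0 \<le> u" "u \<le> 1" using c closed_segment_0 by auto
      obtain t where t: "s = (\<Sum>v\<in>F. t v *\<^sub>R v)" "\<forall>v\<in>F. 0 \<le> t v \<and> t v \<le> 1" using s insert.IH by auto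
      have "(\<Sum>v\<in>insert x F. (t(x:=u)) v *\<^sub>R v) = u *\<^sub>R x + (\<Sum>v\<in>F. (t(x:=u)) v *\<^sub>R v)"
        using insert by simp
      also have "(\<Sum>v\<in>F. (t(x:=u)) v *\<^sub>R v) = (\<Sum>v\<in>F. t v *\<^sub>R v)"
        using insert by (intro sum.cong) auto
      finally have "z = (\<Sum>v\<in>insert x F. (t(x:=u)) v *\<^sub>R v)" using z u t by simp
      moreover have "\<forall>v\<in>insert x F. 0 \<le> (t(x:=u)) v \<and> (t(x:=u)) v \<le> 1" using t u by auto
      ultimately show "z \<in> {\<Sum>v\<in>insert x F. t v *\<^sub>R v | t. \<forall>v\<in>insert x F. 0 \<le> t v \<and> t v \<le> 1}" by blast
    qed
  next
    show "{\<Sum>v\<in>insert x F. t v *\<^sub>R v | t. \<forall>v\<in>insert x F. 0 \<le> t v \<and> t v \<le> 1} \<subseteq> closed_segment 0 x + (\<Sum>v\<in>F. closed_segment 0 v)"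
    proof
      fix z assume "z \<in> {\<Sum>v\<in>insert x F. t v *\<^sub>R v | t. \<forall>v\<in>insert x F. 0 \<le> t v \<and> t v \<le> 1}"
      then obtain t where z: "z = (\<Sum>v\<in>insert x F. t v *\<^sub>R v)" and t: "\<forall>v\<in>insert x F. 0 \<le> t v \<and> t v \<le> 1" by blast
      have z2: "z = t x *\<^sub>R x + (\<Sum>v\<in>F. t v *\<^sub>R v)" using z insert by simp
      have "t x *\<^sub>R x \<in> closed_segment 0 x" using t closed_segment_0 by auto
      moreover have "(\<Sum>v\<in>F. t v *\<^sub>R v) \<in> (\<Sum>v\<in>F. closed_segment 0 v)" using t insert.IH by auto
      ultimately show "z \<in> closed_segment 0 x + (\<Sum>v\<in>F. closed_segment 0 v)" using z2 by (auto simp: set_plus_def)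
    qed
  qed
  finally show ?case .
qed

lemma Zpoly:
  fixes G :: "'a::euclidean_space set"
  assumes "finite G"
  shows "polytope (\<Sum>v\<in>G. closed_segment 0 v)"
proof -
  have "(\<Sum>v\<in>G. closed_segment 0 v) = (\<Sum>v\<in>G. convex hull {0,v})" by (simp add: segment_convex_hull)
  also have "\<dots> = convex hull (\<Sum>v\<in>G. {0,v})" by (simp add: convex_hull_set_sum)
  finally have e: "(\<Sum>v\<in>G. closed_segment 0 v) = convex hull (\<Sum>v\<in>G. {0,v})" .
  have "finite (\<Sum>v\<in>G. {0,v})" using assms
    by (induction G rule: finite_induct) (auto intro: finite_set_plus)
  then show ?thesis unfolding polytope_def using e by blast
qed

definition vert :: "'a::real_inner set \<Rightarrow> 'a \<Rightarrow> 'a" where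
  "vert G a = (\<Sum>v\<in>G. (if a \<bullet> v > 0 then 1 else 0) *\<^sub>R v)"

lemma F2:
  fixes G :: "'a::real_inner set"
  assumes "finite G" "\<forall>v\<in>G. a \<bullet> v \<noteq> 0" "\<forall>v\<in>G. 0 \<le> t v \<and> t v \<le> 1"
  shows "a \<bullet> (\<Sum>v\<in>G. t v *\<^sub>R v) \<le> a \<bullet> vert G a"
    and "a \<bullet> (\<Sum>v\<in>G. t v *\<^sub>R v) = a \<bullet> vert G a \<Longrightarrow> \<forall>v\<in>G. t v = (if a \<bullet> v > 0 then 1 else 0)"
proof -
  have l: "a \<bullet> (\<Sum>v\<in>G. t v *\<^sub>R v) = (\<Sum>v\<in>G. t v * (a \<bullet> v))" by (simp add: inner_sum_right)
  have r: "a \<bullet> vert G a = (\<Sum>v\<in>G. (if a \<bullet> v > 0 then 1 else 0) * (a \<bullet> v))"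
    unfolding vert_def by (simp add: inner_sum_right)
  have le: "\<forall>v\<in>G. t v * (a \<bullet> v) \<le> (if a \<bullet> v > 0 then 1 else 0) * (a \<bullet> v)"
  proof
    fix v assume v: "v \<in> G"
    show "t v * (a \<bullet> v) \<le> (if a \<bullet> v > 0 then 1 else 0) * (a \<bullet> v)"
      using assms(3) v by (cases "a \<bullet> v > 0") (auto simp: mult_le_cancel_right1 mult_nonneg_nonpos)
  qed
  show "a \<bullet> (\<Sum>v\<in>G. t v *\<^sub>R v) \<le> a \<bullet> vert G a" unfolding l r using le by (intro sum_mono) auto
  assume eq: "a \<bullet> (\<Sum>v\<in>G. t v *\<^sub>R v) = a \<bullet> vert G a"
  have "(\<Sum>v\<in>G. (if a \<bullet> v > 0 then 1 else 0) * (a \<bullet> v) - t v * (a \<bullet> v)) = 0"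
    using eq unfolding l r by (simp add: sum_subtractf)
  then have z: "\<forall>v\<in>G. (if a \<bullet> v > 0 then 1 else 0) * (a \<bullet> v) - t v * (a \<bullet> v) = 0"
    using le assms(1) by (subst (asm) sum_nonneg_eq_0_iff) auto
  show "\<forall>v\<in>G. t v = (if a \<bullet> v > 0 then 1 else 0)"
  proof
    fix v assume v: "v \<in> G"
    have "((if a \<bullet> v > 0 then 1 else 0) - t v) * (a \<bullet> v) = 0" using z v by (simp add: algebra_simps)
    then show "t v = (if a \<bullet> v > 0 then 1 else 0)" using assms(2) v by simp
  qed
qed


lemma vert_in:
  fixes G :: "'a::euclidean_space set"
  assumes "finite G"
  shows "vert G a \<in> (\<Sum>v\<in>G. closed_segment 0 v)"
  unfolding Zparam[OF assms] vert_def by (rule CollectI, rule exI[of _ "\<lambda>v. if a \<bullet> v > 0 then 1 else 0"]) auto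

lemma ext_char:
  fixes G :: "'a::euclidean_space set"
  assumes fin: "finite G" and nz: "0 \<notin> G"
  shows "{x. x extreme_point_of (\<Sum>v\<in>G. closed_segment 0 v)} = vert G ` {a. \<forall>v\<in>G. a \<bullet> v \<noteq> 0}"
    (is "?E = _")
proof
  let ?Z = "\<Sum>v\<in>G. closed_segment 0 v"
  have poly: "polytope ?Z" using Zpoly[OF fin] .
  show "?E \<subseteq> vert G ` {a. \<forall>v\<in>G. a \<bullet> v \<noteq> 0}"
  proof
    fix x assume "x \<in> ?E"
    then have "{x} face_of ?Z" by (simp add: face_of_singleton)
    then have "{x} exposed_face_of ?Z" using exposed_face_of_polyhedron polytope_imp_polyhedron poly by blast
    then obtain a b where sup: "?Z \<subseteq> {y. a \<bullet> y \<le> b}" and ex: "{x} = ?Z \<inter> {y. a \<bullet> y = b}"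
      unfolding exposed_face_of_def by blast
    have xZ: "x \<in> ?Z" and ab: "a \<bullet> x = b" using ex by auto
    obtain t where xt: "x = (\<Sum>v\<in>G. t v *\<^sub>R v)" and t: "\<forall>v\<in>G. 0 \<le> t v \<and> t v \<le> 1"
      using xZ unfolding Zparam[OF fin] by blast
    have gen: "\<forall>v\<in>G. a \<bullet> v \<noteq> 0"
    proof (rule ccontr)
      assume "\<not> (\<forall>v\<in>G. a \<bullet> v \<noteq> 0)"
      then obtain v where v: "v \<in> G" "a \<bullet> v = 0" by auto
      define d :: real where "d = (if t v \<le> 1/2 then 1/2 else -1/2)"
      define t' where "t' = t(v := t v + d)"
      have t': "\<forall>w\<in>G. 0 \<le> t' w \<and> t' w \<le> 1" using t v unfolding t'_def d_def by auto
      have "(\<Sum>w\<in>G. t' w *\<^sub>R w) = t' v *\<^sub>R v + (\<Sum>w\<in>G-{v}. t' w *\<^sub>R w)"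
        using v fin by (simp add: sum.remove)
      also have "(\<Sum>w\<in>G-{v}. t' w *\<^sub>R w) = (\<Sum>w\<in>G-{v}. t w *\<^sub>R w)"
        unfolding t'_def by (intro sum.cong) auto
      also have "t' v *\<^sub>R v = t v *\<^sub>R v + d *\<^sub>R v" unfolding t'_def by (simp add: scaleR_add_left)
      finally have "(\<Sum>w\<in>G. t' w *\<^sub>R w) = x + d *\<^sub>R v"
        using v fin unfolding xt by (simp add: sum.remove algebra_simps)
      moreover have "(\<Sum>w\<in>G. t' w *\<^sub>R w) \<in> ?Z" unfolding Zparam[OF fin] using t' by blast
      ultimately have "x + d *\<^sub>R v \<in> ?Z \<inter> {y. a \<bullet> y = b}" using ab v by (auto simp: inner_add_right)
      then have "x + d *\<^sub>R v = x" using ex by blast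
      then have "v = 0" unfolding d_def by (auto split: if_splits)
      then show False using nz v by auto
    qed
    have "a \<bullet> vert G a \<le> b" using sup vert_in[OF fin] by blast
    moreover have "a \<bullet> x \<le> a \<bullet> vert G a" using F2(1)[OF fin gen t] xt by simp
    ultimately have "a \<bullet> (\<Sum>v\<in>G. t v *\<^sub>R v) = a \<bullet> vert G a" using ab xt by simp
    then have "\<forall>v\<in>G. t v = (if a \<bullet> v > 0 then 1 else 0)" using F2(2)[OF fin gen t] by blast
    then have "x = vert G a" unfolding xt vert_def by (intro sum.cong) auto
    then show "x \<in> vert G ` {a. \<forall>v\<in>G. a \<bullet> v \<noteq> 0}" using gen by blast
  qed
next
  let ?Z = "\<Sum>v\<in>G. closed_segment 0 v"
  have poly: "polytope ?Z" using Zpoly[OF fin] .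
  show "vert G ` {a. \<forall>v\<in>G. a \<bullet> v \<noteq> 0} \<subseteq> ?E"
  proof
    fix x assume "x \<in> vert G ` {a. \<forall>v\<in>G. a \<bullet> v \<noteq> 0}"
    then obtain a where gen: "\<forall>v\<in>G. a \<bullet> v \<noteq> 0" and x: "x = vert G a" by blast
    have sup: "\<And>y. y \<in> ?Z \<Longrightarrow> a \<bullet> y \<le> a \<bullet> vert G a"
      using F2(1)[OF fin gen] unfolding Zparam[OF fin] by blast
    have "(?Z \<inter> {y. a \<bullet> y = a \<bullet> vert G a}) exposed_face_of ?Z"
      by (rule exposed_face_of_Int_supporting_hyperplane_le[OF polytope_imp_convex[OF poly] sup])
    then have f: "(?Z \<inter> {y. a \<bullet> y = a \<bullet> vert G a}) face_of ?Z" by (simp add: exposed_face_of_def)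
    have "?Z \<inter> {y. a \<bullet> y = a \<bullet> vert G a} = {x}"
    proof
      show "{x} \<subseteq> ?Z \<inter> {y. a \<bullet> y = a \<bullet> vert G a}" using x vert_in[OF fin] by auto
      show "?Z \<inter> {y. a \<bullet> y = a \<bullet> vert G a} \<subseteq> {x}"
      proof
        fix y assume y: "y \<in> ?Z \<inter> {y. a \<bullet> y = a \<bullet> vert G a}"
        then obtain t where yt: "y = (\<Sum>v\<in>G. t v *\<^sub>R v)" and t: "\<forall>v\<in>G. 0 \<le> t v \<and> t v \<le> 1"
          unfolding Zparam[OF fin] by blast
        have "\<forall>v\<in>G. t v = (if a \<bullet> v > 0 then 1 else 0)" using F2(2)[OF fin gen t] y yt by simp
        then have "y = vert G a" unfolding yt vert_def by (intro sum.cong) auto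
        then show "y \<in> {x}" using x by simp
      qed
    qed
    then show "x \<in> ?E" using f by (simp add: face_of_singleton)
  qed
qed



definition cross :: "real \<times> real \<Rightarrow> real \<times> real \<Rightarrow> real" where
  "cross x y = fst x * snd y - snd x * fst y"

lemma inner2: "(a::real\<times>real) \<bullet> w = fst a * fst w + snd a * snd w"
  by (simp add: inner_prod_def)

lemma cross_ident: "cross w w' * (a \<bullet> a) = (a \<bullet> w) * cross a w' - cross a w * (a \<bullet> w')"
  unfolding cross_def inner2 by (simp add: algebra_simps)

lemma cross_neg1[simp]: "cross (-u) v = - cross u v" and cross_neg2[simp]: "cross u (-v) = - cross u v"
  and cross_anti: "cross v u = - cross u v"
  unfolding cross_def by auto

locale gset =
  fixes G :: "(real \<times> real) set"
  assumes fin: "finite G" and ne: "G \<noteq> {}" and nz: "0 \<notin> G" and dj: "\<forall>v\<in>G. -v \<notin> G"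
    and np: "\<forall>u\<in>G. \<forall>v\<in>G. cross u v = 0 \<longrightarrow> u = v"
begin

definition "W = G \<union> uminus ` G"
definition "Gen = {a. \<forall>v\<in>G. a \<bullet> v \<noteq> 0}"
definition "P w w' \<longleftrightarrow> w' = w \<or> cross w w' > 0"

lemma finW: "finite W" unfolding W_def using fin by auto

lemma cardW: "card W = 2 * card G"
proof -
  have "card W = card G + card (uminus ` G)" unfolding W_def
    using fin dj by (intro card_Un_disjoint) auto
  also have "card (uminus ` G) = card G" by (intro card_image) (auto simp: inj_on_def)
  finally show ?thesis by simp
qed

lemma W_cases: "w \<in> W \<Longrightarrow> (w \<in> G \<Longrightarrow> Q) \<Longrightarrow> (-w \<in> G \<Longrightarrow> Q) \<Longrightarrow> Q"
  unfolding W_def by auto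

lemma Wnz: assumes "w \<in> W" shows "w \<noteq> 0"
  using assms proof (rule W_cases)
  assume "w \<in> G" then show ?thesis using nz by metis
next
  assume "-w \<in> G" then show ?thesis using nz by (metis neg_0_equal_iff_equal)
qed

lemma W2: assumes "w \<in> W" "w' \<in> W" "cross w w' = 0" shows "w' = w \<or> w' = -w"
proof -
  have a: "\<And>u v. u \<in> G \<Longrightarrow> v \<in> G \<Longrightarrow> cross u v = 0 \<Longrightarrow> u = v" using np by blast
  show ?thesis using assms(1) proof (rule W_cases)
    assume w: "w \<in> G"
    show ?thesis using assms(2) proof (rule W_cases)
      assume "w' \<in> G" then show ?thesis using a[OF w, of w'] assms(3) by metis
    next
      assume "-w' \<in> G" then show ?thesis using a[OF w, of "-w'"] assms(3) by auto
    qed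
  next
    assume w: "-w \<in> G"
    show ?thesis using assms(2) proof (rule W_cases)
      assume "w' \<in> G" then show ?thesis using a[OF w, of "w'"] assms(3) by auto
    next
      assume "-w' \<in> G" then show ?thesis using a[OF w, of "-w'"] assms(3) by auto
    qed
  qed
qed

lemma Wgen: assumes "a \<in> Gen" "w \<in> W" shows "a \<bullet> w \<noteq> 0"
  using assms(2) proof (rule W_cases)
  assume "w \<in> G" then show ?thesis using assms(1) unfolding Gen_def by blast
next
  assume "-w \<in> G" then have "a \<bullet> (-w) \<noteq> 0" using assms(1) unfolding Gen_def by blast
  then show ?thesis by simp
qed

lemma negW: "w \<in> W \<Longrightarrow> -w \<in> W"
  unfolding W_def by (auto simp: image_iff)

lemma uniq: assumes "w1 \<in> W" "w2 \<in> W" "\<forall>w'\<in>W. P w1 w' \<longleftrightarrow> P w2 w'" shows "w1 = w2"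
proof (rule ccontr)
  assume ne: "w1 \<noteq> w2"
  have "P w2 w2" by (simp add: P_def)
  then have "cross w1 w2 > 0" using assms ne by (auto simp: P_def)
  moreover have "P w1 w1" by (simp add: P_def)
  then have "cross w2 w1 > 0" using assms ne by (auto simp: P_def)
  ultimately show False using cross_anti[of w2 w1] by simp
qed

lemma choose: assumes a: "a \<in> Gen" shows "\<exists>w\<in>W. \<forall>w'\<in>W. (a \<bullet> w' > 0 \<longleftrightarrow> P w w')"
proof -
  define H where "H = {w\<in>W. a \<bullet> w > 0}"
  obtain v where v: "v \<in> G" using ne by auto
  have vW: "v \<in> W" "-v \<in> W" using v unfolding W_def by auto
  have "a \<bullet> v \<noteq> 0" using a v unfolding Gen_def by auto
  then have Hne: "H \<noteq> {}"
  proof (cases "a \<bullet> v > 0")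
    case True then have "v \<in> H" unfolding H_def using vW by blast
    then show ?thesis by blast
  next
    case False then have "a \<bullet> (-v) > 0" using \<open>a \<bullet> v \<noteq> 0\<close> by simp
    then have "-v \<in> H" unfolding H_def using vW by blast
    then show ?thesis by blast
  qed
  have Hfin: "finite H" unfolding H_def using finW by auto
  have an: "a \<bullet> a > 0" using \<open>a \<bullet> v \<noteq> 0\<close> by (metis inner_gt_zero_iff inner_zero_left)
  define f where "f x = cross a x / (a \<bullet> x)" for x
  obtain w where wH: "w \<in> H" and wmin: "\<forall>y\<in>H. f w \<le> f y"
  proof -
    have "Min (f ` H) \<in> f ` H" using Hne Hfin by auto
    then obtain w where "w \<in> H" "f w = Min (f ` H)" by auto
    then show ?thesis using that Hfin by auto
  qed
  have key: "cross w y * (a \<bullet> a) = (a \<bullet> w) * (a \<bullet> y) * (f y - f w)"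
    if "a \<bullet> y \<noteq> 0" for y
    using that wH unfolding H_def f_def cross_ident by (simp add: field_simps)
  have ww: "w \<in> W" "a \<bullet> w > 0" using wH unfolding H_def by auto
  show ?thesis
  proof (intro bexI[OF _ ww(1)] ballI)
    fix y assume yW: "y \<in> W"
    have ay: "a \<bullet> y \<noteq> 0" using Wgen[OF a yW] .
    show "a \<bullet> y > 0 \<longleftrightarrow> P w y"
    proof
      assume pos: "a \<bullet> y > 0"
      show "P w y"
      proof (cases "y = w")
        case True then show ?thesis by (simp add: P_def)
      next
        case False
        have "y \<noteq> -w" using pos ww by auto
        then have c0: "cross w y \<noteq> 0" using W2[OF ww(1) yW] False by auto
        have "y \<in> H" using pos yW unfolding H_def by blast
        then have "f w \<le> f y" using wmin by blast
        then have "cross w y * (a \<bullet> a) \<ge> 0" using key[OF ay] pos ww by simp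
        then have "cross w y \<ge> 0" using an by (simp add: zero_le_mult_iff)
        then show ?thesis using c0 by (simp add: P_def)
      qed
    next
      assume "P w y"
      show "a \<bullet> y > 0"
      proof (rule ccontr)
        assume "\<not> a \<bullet> y > 0"
        then have neg: "a \<bullet> (-y) > 0" using ay by simp
        have "y \<noteq> w" using ww \<open>\<not> a \<bullet> y > 0\<close> by auto
        then have cp: "cross w y > 0" using \<open>P w y\<close> by (simp add: P_def)
        have "-y \<in> H" using neg negW[OF yW] unfolding H_def by auto
        then have "f w \<le> f (-y)" using wmin by auto
        then have "(a \<bullet> w) * (a \<bullet> (-y)) * (f (-y) - f w) \<ge> 0" using neg ww
          by (intro mult_nonneg_nonneg) auto
        then have "cross w (-y) * (a \<bullet> a) \<ge> 0" using key[of "-y"] neg by simp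
        then have "cross w (-y) \<ge> 0" using an by (metis zero_le_mult_iff not_le)
        then show False using cp by simp
      qed
    qed
  qed
qed


lemma realize: assumes wW: "w \<in> W" shows "\<exists>a\<in>Gen. \<forall>w'\<in>W. (a \<bullet> w' > 0 \<longleftrightarrow> P w w')"
proof -
  define S where "S = {w'\<in>W. cross w w' \<noteq> 0}"
  define e where "e = Min (insert 1 ((\<lambda>w'. \<bar>cross w w'\<bar> / (\<bar>w \<bullet> w'\<bar> + 1)) ` S))"
  have fS: "finite S" unfolding S_def using finW by auto
  have epos: "e > 0" unfolding e_def using fS
    by (subst Min_gr_iff) (auto simp: S_def)
  have ele: "e * (\<bar>w \<bullet> w'\<bar> + 1) \<le> \<bar>cross w w'\<bar>" if "w' \<in> S" for w'
  proof -
    have "e \<le> \<bar>cross w w'\<bar> / (\<bar>w \<bullet> w'\<bar> + 1)" unfolding e_def using fS that by (intro Min_le) auto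
    then show ?thesis by (simp add: pos_le_divide_eq add_pos_nonneg)
  qed
  define a where "a = e *\<^sub>R w + (- snd w, fst w)"
  have aw: "a \<bullet> y = e * (w \<bullet> y) + cross w y" for y
    unfolding a_def inner2 cross_def by (simp add: algebra_simps)
  have wnz: "w \<bullet> w > 0" using Wnz[OF wW] by simp
  have main: "(a \<bullet> y > 0 \<longleftrightarrow> P w y) \<and> a \<bullet> y \<noteq> 0" if yW: "y \<in> W" for y
  proof (cases "cross w y = 0")
    case True
    then have "y = w \<or> y = -w" using W2[OF wW yW] by auto
    then show ?thesis
    proof
      assume "y = w" then show ?thesis using aw[of y] epos wnz True by (simp add: P_def)
    next
      assume yw: "y = -w"
      have "y \<noteq> w" using yw Wnz[OF wW] by (cases w) (auto simp: zero_prod_def)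
      moreover have "e * (w \<bullet> w) > 0" using epos wnz by simp
      moreover have "a \<bullet> y = - (e * (w \<bullet> w))" using aw[of y] yw True by simp
      ultimately show ?thesis using True unfolding P_def
        by (metis neg_less_0_iff_less less_irrefl not_less_iff_gr_or_eq)
    qed
  next
    case False
    then have "y \<in> S" using yW unfolding S_def by auto
    then have b: "e * (\<bar>w \<bullet> y\<bar> + 1) \<le> \<bar>cross w y\<bar>" by (rule ele)
    have "\<bar>e * (w \<bullet> y)\<bar> < \<bar>cross w y\<bar>" using b epos
      by (simp add: abs_mult algebra_simps)
    moreover have "y \<noteq> w" using False by (auto simp: cross_def)
    ultimately show ?thesis using aw[of y] False by (auto simp: P_def)
  qed
  have "a \<in> Gen" unfolding Gen_def using main unfolding W_def by blast
  then show ?thesis using main by blast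
qed

lemma vert_eq: assumes "a \<in> Gen" "b \<in> Gen"
  shows "vert G a = vert G b \<longleftrightarrow> (\<forall>w\<in>W. a \<bullet> w > 0 \<longleftrightarrow> b \<bullet> w > 0)"
proof
  assume e: "vert G a = vert G b"
  have ga: "\<forall>v\<in>G. a \<bullet> v \<noteq> 0" using assms(1) unfolding Gen_def by blast
  have t: "\<forall>v\<in>G. 0 \<le> (if b \<bullet> v > 0 then 1 else 0 :: real) \<and> (if b \<bullet> v > 0 then 1 else 0 :: real) \<le> 1" by auto
  have "a \<bullet> (\<Sum>v\<in>G. (if b \<bullet> v > 0 then 1 else 0) *\<^sub>R v) = a \<bullet> vert G a"
    using e unfolding vert_def by simp
  then have eq: "\<forall>v\<in>G. (if b \<bullet> v > 0 then 1 else 0 :: real) = (if a \<bullet> v > 0 then 1 else 0)"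
    using F2(2)[OF fin ga t] by blast
  show "\<forall>w\<in>W. a \<bullet> w > 0 \<longleftrightarrow> b \<bullet> w > 0"
  proof
    fix w assume wW: "w \<in> W"
    show "a \<bullet> w > 0 \<longleftrightarrow> b \<bullet> w > 0" using wW
    proof (rule W_cases)
      assume "w \<in> G" then show ?thesis using eq by (metis one_neq_zero)
    next
      assume m: "-w \<in> G"
      then have "a \<bullet> (-w) > 0 \<longleftrightarrow> b \<bullet> (-w) > 0" using eq by (metis one_neq_zero)
      moreover have "a \<bullet> w \<noteq> 0" "b \<bullet> w \<noteq> 0" using Wgen assms wW by auto
      ultimately show ?thesis by auto
    qed
  qed
next
  assume "\<forall>w\<in>W. a \<bullet> w > 0 \<longleftrightarrow> b \<bullet> w > 0"
  then have ab: "\<forall>w\<in>G. a \<bullet> w > 0 \<longleftrightarrow> b \<bullet> w > 0" unfolding W_def by blast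
  show "vert G a = vert G b" unfolding vert_def
  proof (rule sum.cong[OF refl])
    fix w assume "w \<in> G"
    then have "a \<bullet> w > 0 \<longleftrightarrow> b \<bullet> w > 0" using ab by blast
    then show "(if a \<bullet> w > 0 then 1 else 0) *\<^sub>R w = (if b \<bullet> w > 0 then 1 else 0) *\<^sub>R w" by simp
  qed
qed

lemma card_vert: "card (vert G ` Gen) = 2 * card G"
proof -
  define A where "A w = (SOME a. a \<in> Gen \<and> (\<forall>w'\<in>W. (a \<bullet> w' > 0 \<longleftrightarrow> P w w')))" for w
  have A: "A w \<in> Gen \<and> (\<forall>w'\<in>W. (A w \<bullet> w' > 0 \<longleftrightarrow> P w w'))" if "w \<in> W" for w
  proof -
    have "\<exists>a. a \<in> Gen \<and> (\<forall>w'\<in>W. (a \<bullet> w' > 0 \<longleftrightarrow> P w w'))" using realize[OF that] by (simp only: Bex_def)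
    from someI_ex[OF this] show ?thesis unfolding A_def .
  qed
  have Ag: "A w \<in> Gen" if "w \<in> W" for w using A[OF that] by (rule conjunct1)
  have Ap: "A w \<bullet> w' > 0 \<longleftrightarrow> P w w'" if "w \<in> W" "w' \<in> W" for w w'
    using A[OF that(1)] that(2) by (simp only: Ball_def)
  have "bij_betw (\<lambda>w. vert G (A w)) W (vert G ` Gen)"
  proof (rule bij_betw_imageI)
    show "inj_on (\<lambda>w. vert G (A w)) W"
    proof (rule inj_onI)
      fix w1 w2 assume w: "w1 \<in> W" "w2 \<in> W" and e: "vert G (A w1) = vert G (A w2)"
      have h: "\<forall>w'\<in>W. A w1 \<bullet> w' > 0 \<longleftrightarrow> A w2 \<bullet> w' > 0"
        using iffD1[OF vert_eq[OF Ag[OF w(1)] Ag[OF w(2)]] e] .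
      have "\<forall>w'\<in>W. P w1 w' \<longleftrightarrow> P w2 w'"
      proof
        fix w' assume w': "w' \<in> W"
        have f1: "A w1 \<bullet> w' > 0 \<longleftrightarrow> P w1 w'" by (rule Ap[OF w(1) w'])
        have f2: "A w2 \<bullet> w' > 0 \<longleftrightarrow> P w2 w'" by (rule Ap[OF w(2) w'])
        have f3: "A w1 \<bullet> w' > 0 \<longleftrightarrow> A w2 \<bullet> w' > 0" using h w' by (rule bspec)
        show "P w1 w' \<longleftrightarrow> P w2 w'" using f1 f2 f3 by blast
      qed
      then show "w1 = w2" using uniq w by blast
    qed
    show "(\<lambda>w. vert G (A w)) ` W = vert G ` Gen"
    proof
      show "(\<lambda>w. vert G (A w)) ` W \<subseteq> vert G ` Gen" using Ag by blast
      show "vert G ` Gen \<subseteq> (\<lambda>w. vert G (A w)) ` W"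
      proof
        fix x assume "x \<in> vert G ` Gen"
        then obtain a where a: "a \<in> Gen" "x = vert G a" by blast
        obtain w where w: "w \<in> W" and wp: "\<forall>w'\<in>W. (a \<bullet> w' > 0 \<longleftrightarrow> P w w')" using choose[OF a(1)] by blast
        have "\<forall>w'\<in>W. a \<bullet> w' > 0 \<longleftrightarrow> A w \<bullet> w' > 0"
        proof
          fix w' assume w': "w' \<in> W"
          have f1: "a \<bullet> w' > 0 \<longleftrightarrow> P w w'" using wp w' by (rule bspec)
          have f2: "A w \<bullet> w' > 0 \<longleftrightarrow> P w w'" by (rule Ap[OF w w'])
          show "a \<bullet> w' > 0 \<longleftrightarrow> A w \<bullet> w' > 0" using f1 f2 by blast
        qed
        then have "vert G a = vert G (A w)" using iffD2[OF vert_eq[OF a(1) Ag[OF w]]] by blast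
        then have "x = vert G (A w)" using a(2) by simp
        then show "x \<in> (\<lambda>w. vert G (A w)) ` W" using w by (rule image_eqI)
      qed
    qed
  qed
  then have "card W = card (vert G ` Gen)" by (rule bij_betw_same_card)
  then show ?thesis using cardW by simp
qed

theorem card_ext: "card {x. x extreme_point_of (\<Sum>v\<in>G. closed_segment 0 v)} = 2 * card G"
  using ext_char[OF fin nz] card_vert unfolding Gen_def by simp

end



lemma prim_np:
  fixes a b c d :: int
  assumes "(a,b) \<in> gens p" "(c,d) \<in> gens p" "a * d - b * c = 0"
  shows "a = c \<and> b = d"
proof -
  have h1: "gcd a b = 1" "a > 0 \<or> (a = 0 \<and> b > 0)" using assms(1) unfolding mem_gens by simp_all
  have h2: "gcd c d = 1" "c > 0 \<or> (c = 0 \<and> d > 0)" using assms(2) unfolding mem_gens by simp_all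
  have e: "a * d = b * c" using assms(3) by simp
  have cab: "coprime a b" using h1(1) by (simp only: coprime_iff_gcd_eq_1)
  have ccd: "coprime c d" using h2(1) by (simp only: coprime_iff_gcd_eq_1)
  have d1: "a dvd b * c" unfolding e[symmetric] by simp
  have ac: "a dvd c" using iffD1[OF coprime_dvd_mult_right_iff[OF cab] d1] .
  have d2: "c dvd a * d" unfolding e by simp
  have ca: "c dvd a" using iffD1[OF coprime_dvd_mult_left_iff[OF ccd] d2] .
  have "\<bar>a\<bar> = \<bar>c\<bar>" using zdvd_antisym_abs[OF ac ca] .
  then have "a = c" using h1 h2 by auto
  show ?thesis
  proof (cases "a = 0")
    case True
    then have "gcd 0 b = 1" "gcd 0 d = 1" using h1 h2 \<open>a = c\<close> by auto
    then have "\<bar>b\<bar> = 1" "\<bar>d\<bar> = 1" by auto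
    then show ?thesis using True h1 h2 \<open>a = c\<close> by auto
  next
    case False
    then show ?thesis using e \<open>a = c\<close> by (simp add: mult.commute)
  qed
qed

lemma gens_fin: "finite (gens p)"
proof -
  have "gens p \<subseteq> {- int p..int p} \<times> {- int p..int p}" unfolding gens_def by auto
  then show ?thesis by (rule finite_subset) auto
qed

lemma inj_to_real2: "inj to_real2"
  unfolding inj_def to_real2_def by (auto simp: prod_eq_iff)

lemma img_pair: assumes "x \<in> to_real2 ` gens p"
  obtains a b where "(a,b) \<in> gens p" "x = (real_of_int a, real_of_int b)"
proof -
  from assms obtain u where u: "u \<in> gens p" "x = to_real2 u" by blast
  obtain a b where ab: "u = (a,b)" by (cases u)
  show ?thesis using that[of a b] u unfolding ab to_real2_def by simp
qed

lemma gset_inst: assumes "p \<ge> 1" shows "gset (to_real2 ` gens p)"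
proof
  show "finite (to_real2 ` gens p)" using gens_fin by simp
  have "(1,0) \<in> gens p" unfolding mem_gens using assms by simp
  then show "to_real2 ` gens p \<noteq> {}" by blast
  show "0 \<notin> to_real2 ` gens p"
  proof
    assume "0 \<in> to_real2 ` gens p"
    then obtain a b where ab: "(a,b) \<in> gens p" "(0::real\<times>real) = (real_of_int a, real_of_int b)" by (rule img_pair)
    then have "a = 0" "b = 0" by (simp_all add: zero_prod_def)
    then show False using ab(1) unfolding mem_gens by simp
  qed
  show "\<forall>v\<in>to_real2 ` gens p. - v \<notin> to_real2 ` gens p"
  proof (intro ballI notI)
    fix x assume x1: "x \<in> to_real2 ` gens p" and x2: "-x \<in> to_real2 ` gens p"
    obtain a b where u: "(a,b) \<in> gens p" "x = (real_of_int a, real_of_int b)" using x1 by (rule img_pair)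
    obtain c d where v: "(c,d) \<in> gens p" "-x = (real_of_int c, real_of_int d)" using x2 by (rule img_pair)
    have "real_of_int c = - real_of_int a" "real_of_int d = - real_of_int b" using u(2) v(2) by auto
    then have cd: "c = - a" "d = - b" by linarith+
    have "a > 0 \<or> (a = 0 \<and> b > 0)" "c > 0 \<or> (c = 0 \<and> d > 0)" using u(1) v(1) unfolding mem_gens by simp_all
    then show False using cd by linarith
  qed
  show "\<forall>u\<in>to_real2 ` gens p. \<forall>v\<in>to_real2 ` gens p. cross u v = 0 \<longrightarrow> u = v"
  proof (intro ballI impI)
    fix x y assume x1: "x \<in> to_real2 ` gens p" and y1: "y \<in> to_real2 ` gens p" and cr: "cross x y = 0"
    obtain a b where u: "(a,b) \<in> gens p" "x = (real_of_int a, real_of_int b)" using x1 by (rule img_pair)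
    obtain c d where v: "(c,d) \<in> gens p" "y = (real_of_int c, real_of_int d)" using y1 by (rule img_pair)
    have "real_of_int (a * d - b * c) = 0" using cr unfolding u(2) v(2) cross_def by simp
    then have "a * d - b * c = 0" by (simp only: of_int_eq_0_iff)
    then have "a = c \<and> b = d" using prim_np u(1) v(1) by blast
    then show "x = y" using u v by simp
  qed
qed

theorem proposition4p3:
  fixes p :: nat
  assumes "p \<ge> 1"
  shows "m2 p = 8 * (\<Sum>j=1..p. totient j)"
proof -
  have H: "H_inf2 p = (\<Sum>w\<in>to_real2 ` gens p. closed_segment 0 w)"
    unfolding H_inf2_def using inj_to_real2
    by (subst sum.reindex) (auto intro: inj_on_subset)
  have "m2 p = 2 * card (to_real2 ` gens p)"
    unfolding m2_def H using gset.card_ext[OF gset_inst[OF assms]] .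
  also have "card (to_real2 ` gens p) = card (gens p)"
    using inj_to_real2 by (intro card_image) (auto intro: inj_on_subset)
  finally show ?thesis using card_gens by simp
qed


end
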